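(* Let $p>1$ and $0\le a<p-1$. For every integer $n\ge 2$, $$\bigl(n^p-(n-1)^p-n^a\bigr)\,T_{n-1}(p-a)\;\ge\; n^a\, S_{n-1}(p-a),$$ where $T_m(q)=\sum_{k=m+1}^{\infty}k^{-q}$ and $S_m(q)=\sum_{k=1}^{m}k^{-q}$.
   Context: For $q>1$ and an integer $m\ge 1$: $T_m(q)=\sum_{k=m+1}^\infty k^{-q}$ and $S_m(q)=\sum_{k=1}^m k^{-q}$. *)

theory Defs
  imports Complex_Main
begin

definition T :: "nat \<Rightarrow> real \<Rightarrow> real" where
  "T m q = (\<Sum>k. (real (k + m + 1)) powr (- q))"

definition S :: "nat \<Rightarrow> real \<Rightarrow> real" where
  "S m q = (\<Sum>k=1..m. (real k) powr (- q))"

end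

theory Submission
  imports Defs "HOL-Analysis.Analysis"
begin

lemma blk: "sum g {a..<a+(m::nat)} = (\<Sum>r<m. g (a + r))"
  using sum.shift_bounds_nat_ivl[of g 0 a m] by (simp add: lessThan_atLeast0 add.commute)

lemma pw: "0 \<le> x \<Longrightarrow> 0 < y \<Longrightarrow> x powr q * y powr (-q) = (x/y) powr (q::real)"
  by (subst powr_divide) (auto simp: powr_minus divide_inverse)

lemma finl:
  fixes u v u' v' X Z :: real
  assumes "u > 0" "u' > 0" "X \<ge> 0" "v' / u' \<le> v / u" "u * X  -  v * X \<ge> Z"
  shows "(u' - v') * X \<ge> (u' / u) * Z"
proof  - 
  have "(1  -  v / u) * X = (u * X  -  v * X) / u" using assms(1) by (simp add: field_simps)
  also have "\<dots> \<ge> Z / u" using assms(1,5) by (intro divide_right_mono) auto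
  finally have a: "(1  -  v / u) * X \<ge> Z / u" .
  have b: "(1  -  v' / u') * X \<ge> (1 - v / u) * X" using assms(3,4) by (intro mult_right_mono) auto
  have c: "(u' - v') * X = u'  *  ((1  -  v' / u') * X)" using assms(2) by (simp add: field_simps)
  have "u'  *  ((1  -  v' / u') * X) \<ge> u'  *  (Z / u)" using a b assms(2) by (intro mult_left_mono) auto
  moreover have d: "u' * (Z / u) = (u' / u) * Z" by simp
  ultimately show ?thesis using c by linarith
qed

theorem lemma3p2:
  fixes p a :: real and n :: nat
  assumes "p > 1" and "0 \<le> a" and "a < p - 1" and "n \<ge> 2"
  shows "(real n powr p - real (n - 1) powr p - real n powr a) * T (n - 1) (p - a)
           \<ge> real n powr a * S (n - 1) (p - a)"
proof -
  define q where "q = p - a"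
  define m where "m = n - 1"
  have q1: "q > 1" using assms q_def by simp
  have m1: "m \<ge> 1" and nm: "n = m + 1" using assms m_def by auto
  define f where "f k = real (k + 1) powr (- q)" for k
  define g where "g k = real (k + m + 1) powr (- q)" for k
  have sf: "summable f"
  proof -
    have "summable (\<lambda>k. real k powr (- q))" using q1 summable_real_powr_iff by simp
    hence "summable (\<lambda>k. real (Suc k) powr (- q))" using summable_Suc_iff[of "\<lambda>k. real k powr (- q)"] by blast
    thus ?thesis unfolding f_def by simp
  qed
  define Z where "Z = suminf f"
  define TT where "TT = suminf g"
  have gf: "g = (\<lambda>k. f (k + m))" unfolding f_def g_def by (simp add: algebra_simps)
  have sg: "summable g" unfolding gf using sf summable_ignore_initial_segment by blast
  have Tdef: "T (n-1) q = TT" unfolding T_def TT_def g_def m_def by simp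
  have Sdef: "S (n-1) q = (\<Sum>i<m. f i)" unfolding S_def f_def m_def
    by (rule sum.reindex_bij_witness[where i="\<lambda>k. k + 1" and j="\<lambda>k. k - 1"]) auto
  have ZTS: "Z = TT + S (n-1) q"
    unfolding Z_def TT_def Sdef gf using suminf_split_initial_segment[OF sf, of m] by simp
  define B where "B s = real ((s+1)*(m+1)) powr (-q)" for s
  define A where "A s = (\<Sum>r<m. g (s*(m+1) + 1 + r))" for s
  define C where "C s = (\<Sum>r<m. g (s*m + r))" for s
  have Bf: "B s = real (m+1) powr (-q) * f s" for s
  proof -
    have e: "real ((s+1)*(m+1)) = real (m+1) * real (s+1)" by (simp add: algebra_simps)
    show ?thesis unfolding B_def f_def e by (rule powr_mult)
  qed
  have sB: "B sums (real (m+1) powr (-q) * Z)"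
    unfolding Bf Z_def using sf sums_mult summable_sums by blast
  have gT: "g sums TT" using sg TT_def summable_sums by blast
  have g1: "(\<lambda>s. sum g {s*(m+1)..<s*(m+1)+(m+1)}) sums TT" using sums_group[OF gT, of "m+1"] by (simp del: sum.atLeastLessThan_Suc sum.op_ivl_Suc)
  have blk1: "sum g {s*(m+1)..<s*(m+1)+(m+1)} = B s + A s" for s
  proof -
    have "sum g {s*(m+1)..<s*(m+1)+(m+1)} = g (s*(m+1)) + sum g {Suc (s*(m+1))..<Suc (s*(m+1)) + m}"
      by (subst sum.atLeast_Suc_lessThan) auto
    also have "g (s*(m+1)) = B s" unfolding g_def B_def by (simp add: algebra_simps)
    also have "sum g {Suc (s*(m+1))..<Suc (s*(m+1)) + m} = A s" unfolding A_def blk by simp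
    finally show ?thesis .
  qed
  have sBA: "(\<lambda>s. B s + A s) sums TT" using g1 blk1 by simp
  have sA: "A sums (TT - real (m+1) powr (-q) * Z)"
    using sums_diff[OF sBA sB] by simp
  have sC: "C sums TT" using sums_group[OF gT, of m] m1 unfolding C_def blk by simp
  have AC: "real m powr q * C s \<le> real (m+1) powr q * A s" for s
  proof -
    have "real m powr q * C s = (\<Sum>r<m. real m powr q * g (s*m + r))"
      unfolding C_def by (simp add: sum_distrib_left)
    also have "\<dots> \<le> (\<Sum>r<m. real (m+1) powr q * g (s*(m+1) + 1 + r))"
    proof (rule sum_mono)
      fix r assume "r \<in> {..<m}"
      have pos1: "real (s*m + r + m + 1) > 0" by (rule of_nat_0_less_iff[THEN iffD2]) simp
      have pos2: "real (s*(m+1) + 1 + r + m + 1) > 0" by (rule of_nat_0_less_iff[THEN iffD2]) simp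
      have base: "real m * real (s*(m+1) + 1 + r + m + 1) \<le> real (m+1) * real (s*m + r + m + 1)"
      proof -
        have "m * (s*(m+1) + 1 + r + m + 1) \<le> (m+1) * (s*m + r + m + 1)"
          by (simp add: algebra_simps)
        thus ?thesis by (metis of_nat_le_iff of_nat_mult)
      qed
      have le: "real m / real (s*m + r + m + 1) \<le> real (m+1) / real (s*(m+1) + 1 + r + m + 1)"
        using pos1 pos2 base by (simp add: divide_simps mult.commute)
      have "real m powr q * g (s*m + r) = (real m / real (s*m + r + m + 1)) powr q"
        unfolding g_def by (rule pw) (use pos1 in auto)
      also have "\<dots> \<le> (real (m+1) / real (s*(m+1) + 1 + r + m + 1)) powr q"
        using le q1 by (intro powr_mono2) auto
      also have "\<dots> = real (m+1) powr q * g (s*(m+1) + 1 + r)"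
        unfolding g_def by (rule pw[symmetric]) (use pos2 in auto)
      finally show "real m powr q * g (s*m + r) \<le> real (m+1) powr q * g (s*(m+1) + 1 + r)" .
    qed
    also have "\<dots> = real (m+1) powr q * A s" unfolding A_def by (simp add: sum_distrib_left)
    finally show ?thesis .
  qed
  have key: "real m powr q * TT \<le> real (m+1) powr q * (TT - real (m+1) powr (-q) * Z)"
  proof -
    have s1: "(\<lambda>s. real m powr q * C s) sums (real m powr q * TT)" using sums_mult[OF sC] .
    have s2: "(\<lambda>s. real (m+1) powr q * A s) sums (real (m+1) powr q * (TT - real (m+1) powr (-q) * Z))"
      using sums_mult[OF sA] .
    have al: "\<forall>s. real m powr q * C s \<le> real (m+1) powr q * A s" using AC by simp
    show ?thesis by (rule sums_le[OF AC s1 s2])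
  qed
  define N where "N = real (m+1)"
  have Npos: "N > 0" unfolding N_def by simp
  have TTnn: "TT \<ge> 0" unfolding TT_def g_def by (intro suminf_nonneg sg[unfolded g_def]) auto
  have eN: "N powr q * N powr (-q) = 1" using Npos by (simp add: powr_add[symmetric])
  have e1: "real (m+1) powr q * (TT - real (m+1) powr (-q) * Z) = N powr q * TT - (N powr q * N powr (-q)) * Z"
    unfolding N_def by (simp only: right_diff_distrib mult.assoc)
  have key2: "N powr q * TT - real m powr q * TT \<ge> Z"
    using key e1 eN by simp
  have tq: "(real m / N) powr p \<le> (real m / N) powr q"
  proof -
    have "real m / N \<le> 1" "real m / N > 0" using Npos m1 unfolding N_def by auto
    thus ?thesis using q_def assms by (intro powr_mono') auto
  qed
  have tq2: "real m powr p / N powr p \<le> real m powr q / N powr q"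
    using tq Npos by (simp add: powr_divide)
  have fin: "(N powr p - real m powr p) * TT \<ge> (N powr p / N powr q) * Z"
    by (rule finl[OF _ _ TTnn tq2 key2]) (use Npos in auto)
  have Na: "N powr p / N powr q = N powr a" using Npos by (simp add: powr_diff[symmetric] q_def)
  have rn: "real n = N" "real (n-1) = real m" unfolding N_def nm by auto
  have Tq: "T (n - 1) (p - a) = TT" "S (n - 1) (p - a) = Z - TT" using Tdef ZTS q_def by auto
  have d1: "(N powr p - real m powr p - N powr a) * TT = (N powr p - real m powr p) * TT - N powr a * TT"
    by (simp only: left_diff_distrib)
  have d2: "N powr a * (Z - TT) = N powr a * Z - N powr a * TT" by (simp only: right_diff_distrib)
  show ?thesis unfolding rn Tq using fin Na d1 d2 by simp
qed

end
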